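(* Let \[ M=\begin{pmatrix} \frac15&\frac15&\frac15&\frac15&\frac15\\ \frac35&\frac12&\frac3{10}&0&-\frac25\\ 1&\frac12&-\frac3{14}&-\frac47&\frac27\\ \frac75&0&-\frac45&\frac12&-\frac1{10}\\ \frac95&-\frac65&\frac{18}{35}&-\frac9{70}&\frac1{70} \end{pmatrix}. \] Consider real vectors $\tilde A=(\tilde A_0,\dots,\tilde A_4)$, $\tilde B=(\tilde B_0,\dots,\tilde B_4)$ satisfying: $\tilde A_0=\tilde B_0=1$; $0\le\tilde A_k\le\tilde B_k$ for $0\le k\le4$; $\sum_k\tilde A_k=\tfrac52$; $\sum_k\tilde B_k=10$; $\tilde B=2M\tilde A$; and $\tilde A_1=\tilde B_1$. Then the unique solution is \[ \tilde A=(1,0,0,0,\tfrac32),\qquad \tilde B=(1,0,\tfrac{20}7,\tfrac52,\tfrac{51}{14}). \]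
   Context: This is the normalized intrinsic linear program for two-dimensional codes detecting the adjoint (spin-1) sector inside the spin-2 irrep $V_2\cong\mathrm{Sym}^4(\mathbb C^2)$ of $\mathrm{SU}(2)$: $M$ is the unnormalized MacWilliams matrix $M_{k_1k_2}=(-1)^{4+k_1+k_2}(2k_1+1)\{\begin{smallmatrix}2&2&k_1\\2&2&k_2\end{smallmatrix}\}$ (Wigner $6j$-symbol), and the normalized enumerators of a code with projector $P$ are $\tilde A_k=\frac{N}{K^2}A_k(P,P)$, $\tilde B_k=\frac NK B_k(P,P)$ with $N=5$, $K=2$. *)

theory Defs
  imports Complex_Main
begin

text \<open>The normalized MacWilliams matrix M (rows/columns indexed 0..4).\<close>
definition Mmat :: "nat \<Rightarrow> nat \<Rightarrow> real" where
  "Mmat i j = [[1/5, 1/5, 1/5, 1/5, 1/5],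
               [3/5, 1/2, 3/10, 0, -2/5],
               [1, 1/2, -3/14, -4/7, 2/7],
               [7/5, 0, -4/5, 1/2, -1/10],
               [9/5, -6/5, 18/35, -9/70, 1/70]] ! i ! j"

definition LP_feasible :: "(nat \<Rightarrow> real) \<Rightarrow> (nat \<Rightarrow> real) \<Rightarrow> bool" where
  "LP_feasible A B \<longleftrightarrow>
     A 0 = 1 \<and> B 0 = 1 \<and>
     (\<forall>k<5. 0 \<le> A k \<and> A k \<le> B k) \<and>
     (\<Sum>k<5. A k) = 5/2 \<and> (\<Sum>k<5. B k) = 10 \<and>
     (\<forall>i<5. B i = 2 * (\<Sum>j<5. Mmat i j * A j)) \<and>
     A 1 = B 1"

end

theory Submission
  imports Defs
begin

lemma all5: "(\<forall>k<(5::nat). P k) \<longleftrightarrow> P 0 \<and> P 1 \<and> P 2 \<and> P 3 \<and> P 4"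
  by (auto simp: less_Suc_eq numeral_eq_Suc)

lemma sum5: "(\<Sum>k<(5::nat). f k) = f 0 + f 1 + f 2 + f 3 + (f 4::real)"
  by (simp add: numeral_eq_Suc)

theorem mainTheorem12:
  fixes A B :: "nat \<Rightarrow> real"
  shows "LP_feasible A B \<longleftrightarrow>
    ((\<forall>k<5. A k = [1, 0, 0, 0, 3/2] ! k) \<and>
     (\<forall>k<5. B k = [1, 0, 20/7, 5/2, 51/14] ! k))"
  unfolding LP_feasible_def all5 sum5
  by (simp add: Mmat_def) linarith
end
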